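(* For every positive integer $t$, \[ g(3,t)\ge \frac{16t^2+7t+1}{24t^2+15t+3}. \]
   Context: Let $\mathbb{F}$ be a finite field and $x_1,\dots,x_p$ a basis of $\mathbb{F}^p$. A $[t\times m,p]$ array code is a $t\times m$ array whose entries (cells) are linear combinations of $x_1,\dots,x_p$. It has the $k$-PIR property (is a $[t\times m,p]$ $k$-PIR array code) if for every $i\in\{1,\dots,p\}$ there exist $k$ pairwise disjoint sets $S_1,\dots,S_k$ of columns such that for every $j$ the vector $x_i$ lies in the linear span of all entries of the columns in $S_j$. Its PIR rate is $k/m$. For a rational $s>1$ and a positive integer $t$ with $st$ an integer, $g(s,t)$ is the largest PIR rate $k/m$ of a $[t\times m,st]$ $k$-PIR array code (over all finite fields, all $m$ and all $k$). *)

theory Defs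
  imports Complex_Main "HOL-Algebra.Ring"
begin

text \<open>A finite field is represented (up to isomorphism) as a HOL-Algebra ring
  structure R with carrier a finite set of naturals. A [t x m, p] array code over R
  is a function C, where C r j l is the coefficient of x_l in the cell in row r
  (r < t) and column j (j < m), for l < p.\<close>

definition array_code :: "nat ring \<Rightarrow> nat \<Rightarrow> nat \<Rightarrow> nat \<Rightarrow> (nat \<Rightarrow> nat \<Rightarrow> nat \<Rightarrow> nat) \<Rightarrow> bool" where
  "array_code R t m p C \<longleftrightarrow> (\<forall>r<t. \<forall>j<m. \<forall>l<p. C r j l \<in> carrier R)"

definition in_span_of_columns ::
  "nat ring \<Rightarrow> nat \<Rightarrow> nat \<Rightarrow> (nat \<Rightarrow> nat \<Rightarrow> nat \<Rightarrow> nat) \<Rightarrow> nat \<Rightarrow> nat set \<Rightarrow> bool" where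
  "in_span_of_columns R t p C i S \<longleftrightarrow>
     (\<exists>c. (\<forall>r j. c r j \<in> carrier R) \<and>
          (\<forall>l<p. finsum R (\<lambda>(r, j). c r j \<otimes>\<^bsub>R\<^esub> C r j l) ({..<t} \<times> S)
                  = (if l = i then \<one>\<^bsub>R\<^esub> else \<zero>\<^bsub>R\<^esub>)))"

definition is_PIR_code ::
  "nat ring \<Rightarrow> nat \<Rightarrow> nat \<Rightarrow> nat \<Rightarrow> nat \<Rightarrow> (nat \<Rightarrow> nat \<Rightarrow> nat \<Rightarrow> nat) \<Rightarrow> bool" where
  "is_PIR_code R t m p k C \<longleftrightarrow> array_code R t m p C \<and>
     (\<forall>i<p. \<exists>S :: nat \<Rightarrow> nat set.
        (\<forall>a<k. S a \<subseteq> {..<m}) \<and>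
        (\<forall>a<k. \<forall>b<k. a \<noteq> b \<longrightarrow> S a \<inter> S b = {}) \<and>
        (\<forall>a<k. in_span_of_columns R t p C i (S a)))"

definition PIR_rates :: "real \<Rightarrow> nat \<Rightarrow> real set" where
  "PIR_rates s t = {real k / real m | k m. \<exists>R p C. field R \<and> finite (carrier R) \<and>
      0 < m \<and> 0 < k \<and> real p = s * real t \<and> is_PIR_code R t m p k C}"

definition g :: "real \<Rightarrow> nat \<Rightarrow> real" where
  "g s t = Sup (PIR_rates s t)"

end

theory Submission
  imports Defs "HOL-Combinatorics.Multiset_Permutations"
begin


definition GF2 :: "nat ring" where
  "GF2 = \<lparr>carrier = {0,1}, Group.monoid.mult = (\<lambda>a b. (a*b) mod 2), one = 1, zero = 0, add = (\<lambda>a b. (a+b) mod 2)\<rparr>"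

lemma GF2_simps[simp]: "carrier GF2 = {0,1}" "Group.monoid.mult GF2 a b = (a*b) mod 2" "one GF2 = 1"
  "zero GF2 = 0" "add GF2 a b = (a+b) mod 2"
  by (simp_all add: GF2_def)

lemma GF2_abelian: "abelian_group GF2"
  apply (rule abelian_groupI)
  apply (auto simp: mod_add_left_eq mod_add_right_eq add.assoc add.commute)
  done

lemma GF2_comm_monoid: "comm_monoid GF2"
  apply (rule comm_monoidI)
  apply (auto simp: mod_mult_left_eq mod_mult_right_eq mult.assoc mult.commute)
  done

lemma GF2_cring: "cring GF2"
  apply (rule cringI[OF GF2_abelian GF2_comm_monoid])
  apply (auto)
  done

lemma GF2_field: "field GF2"
proof -
  interpret cring GF2 by (rule GF2_cring)
  show ?thesis
    apply (rule cring_fieldI2)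
     apply simp
    apply (rule_tac x=1 in bexI)
     apply auto
    done
qed

lemma GF2_finsum:
  assumes "finite A" "\<And>x. x \<in> A \<Longrightarrow> f x \<in> {0,1}"
  shows "finsum GF2 f A = (\<Sum>x\<in>A. f x) mod 2"
  using assms
proof (induction A rule: finite_induct)
  case empty
  interpret abelian_group GF2 by (rule GF2_abelian)
  show ?case by simp
next
  case (insert x F)
  interpret abelian_group GF2 by (rule GF2_abelian)
  have "finsum GF2 f (insert x F) = f x \<oplus>\<^bsub>GF2\<^esub> finsum GF2 f F"
    using insert by (intro finsum_insert) auto
  then show ?case using insert by (simp add: mod_add_right_eq)
qed




definition ins :: "nat \<Rightarrow> 'a \<Rightarrow> 'a list \<Rightarrow> 'a list" where
  "ins q a ys = take q ys @ a # drop q ys"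

fun pos :: "'a list \<Rightarrow> 'a \<Rightarrow> nat" where
  "pos [] a = 0"
| "pos (x#xs) a = (if x = a then 0 else Suc (pos xs a))"

lemma pos_less: "a \<in> set xs \<Longrightarrow> pos xs a < length xs"
  by (induction xs) auto

lemma nth_pos: "a \<in> set xs \<Longrightarrow> xs ! pos xs a = a"
  by (induction xs) auto

lemma pos_split: "a \<in> set xs \<Longrightarrow> xs = take (pos xs a) xs @ a # drop (Suc (pos xs a)) xs"
  by (induction xs) auto

lemma remove1_pos: "a \<in> set xs \<Longrightarrow> distinct xs \<Longrightarrow> remove1 a xs = take (pos xs a) xs @ drop (Suc (pos xs a)) xs"
  by (induction xs) auto

lemma ins_remove1: "a \<in> set xs \<Longrightarrow> distinct xs \<Longrightarrow> ins (pos xs a) a (remove1 a xs) = xs"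
proof -
  assume h: "a \<in> set xs" "distinct xs"
  have l: "pos xs a < length xs" by (rule pos_less[OF h(1)])
  show ?thesis
    unfolding ins_def remove1_pos[OF h]
    using l by (subst (3) pos_split[OF h(1)]) (simp add: min_def)
qed

lemma pos_ins: "a \<notin> set ys \<Longrightarrow> q \<le> length ys \<Longrightarrow> pos (ins q a ys) a = q"
proof (induction ys arbitrary: q)
  case Nil
  then show ?case by (simp add: ins_def)
next
  case (Cons y ys)
  then show ?case by (cases q) (auto simp: ins_def)
qed

lemma remove1_ins: "a \<notin> set ys \<Longrightarrow> remove1 a (ins q a ys) = ys"
proof -
  assume h: "a \<notin> set ys"
  then have "a \<notin> set (take q ys)" using in_set_takeD by fastforce
  then show ?thesis unfolding ins_def by (simp add: remove1_append)
qed

lemma set_ins: "set (ins q a ys) = insert a (set ys)"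
proof -
  have "set ys = set (take q ys) \<union> set (drop q ys)" by (metis append_take_drop_id set_append)
  then show ?thesis unfolding ins_def by auto
qed

lemma distinct_ins: "a \<notin> set ys \<Longrightarrow> distinct ys \<Longrightarrow> distinct (ins q a ys)"
proof -
  assume h: "a \<notin> set ys" "distinct ys"
  have "a \<notin> set (take q ys)" "a \<notin> set (drop q ys)" using h(1) in_set_takeD in_set_dropD by fastforce+
  moreover have "set (take q ys) \<inter> set (drop q ys) = {}" using h(2) by (rule set_take_disj_set_drop_if_distinct) simp
  moreover have "distinct (take q ys)" "distinct (drop q ys)" using h(2) by simp_all
  ultimately show ?thesis unfolding ins_def by auto
qed

lemma length_ins: "q \<le> length ys \<Longrightarrow> length (ins q a ys) = Suc (length ys)"
  unfolding ins_def by simp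

lemma take_ins_le: "k \<le> q \<Longrightarrow> q \<le> length ys \<Longrightarrow> take k (ins q a ys) = take k ys"
  unfolding ins_def by (simp add: min_def)

lemma set_take_ins_gt: "q < k \<Longrightarrow> q \<le> length ys \<Longrightarrow> set (take k (ins q a ys)) = insert a (set (take (k - 1) ys))"
proof -
  assume h: "q < k" "q \<le> length ys"
  have "take k (ins q a ys) = take q ys @ take (k - q) (a # drop q ys)"
    unfolding ins_def using h by (simp add: min_def)
  also have "\<dots> = take q ys @ a # take (k - Suc q) (drop q ys)"
  proof -
    have "k - q = Suc (k - Suc q)" using h by simp
    then show ?thesis by simp
  qed
  also have "set \<dots> = insert a (set (take q ys @ take (k - Suc q) (drop q ys)))" by simp
  also have "take q ys @ take (k - Suc q) (drop q ys) = take (q + (k - Suc q)) ys"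
    by (simp add: take_add)
  also have "q + (k - Suc q) = k - 1" using h by simp
  finally show ?thesis .
qed

lemma remove1_perm: "xs \<in> permutations_of_set N \<Longrightarrow> i \<in> N \<Longrightarrow> remove1 i xs \<in> permutations_of_set (N - {i})"
  by (auto simp: permutations_of_set_def set_remove1_eq)

lemma ins_perm: "ys \<in> permutations_of_set (N - {i}) \<Longrightarrow> i \<in> N \<Longrightarrow> ins q i ys \<in> permutations_of_set N"
  by (auto simp: permutations_of_set_def set_ins intro!: distinct_ins)

lemma card_pos_in:
  assumes fin: "finite N" and iN: "i \<in> N" and Q: "Q \<subseteq> {..<card N}"
  shows "card {xs \<in> permutations_of_set N. pos xs i \<in> Q} = card Q * fact (card N - 1)"
proof -
  have fQ: "finite Q" using Q finite_subset by blast
  have "{xs \<in> permutations_of_set N. pos xs i \<in> Q} = (\<lambda>(ys, q). ins q i ys) ` (permutations_of_set (N - {i}) \<times> Q)"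
  proof (intro equalityI subsetI)
    fix xs assume "xs \<in> {xs \<in> permutations_of_set N. pos xs i \<in> Q}"
    then have xs: "xs \<in> permutations_of_set N" "pos xs i \<in> Q" by auto
    have "i \<in> set xs" "distinct xs" using xs iN by (auto simp: permutations_of_set_def)
    then have "xs = ins (pos xs i) i (remove1 i xs)" by (simp add: ins_remove1)
    moreover have "(remove1 i xs, pos xs i) \<in> permutations_of_set (N - {i}) \<times> Q"
      using xs iN remove1_perm by auto
    ultimately show "xs \<in> (\<lambda>(ys, q). ins q i ys) ` (permutations_of_set (N - {i}) \<times> Q)"
      by (metis (no_types, lifting) case_prod_conv image_eqI)
  next
    fix xs assume "xs \<in> (\<lambda>(ys, q). ins q i ys) ` (permutations_of_set (N - {i}) \<times> Q)"
    then obtain ys q where yq: "ys \<in> permutations_of_set (N - {i})" "q \<in> Q" "xs = ins q i ys" by auto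
    have ly: "length ys = card N - 1" using yq fin iN length_finite_permutations_of_set by fastforce
    have "q \<le> length ys" using yq Q ly by auto
    moreover have "i \<notin> set ys" using yq by (auto simp: permutations_of_set_def)
    ultimately have "pos xs i = q" using yq pos_ins by metis
    then show "xs \<in> {xs \<in> permutations_of_set N. pos xs i \<in> Q}" using yq ins_perm iN by auto
  qed
  moreover have "inj_on (\<lambda>(ys, q). ins q i ys) (permutations_of_set (N - {i}) \<times> Q)"
  proof (rule inj_onI, clarify)
    fix ys q ys' q'
    assume a: "ys \<in> permutations_of_set (N - {i})" "q \<in> Q" "ys' \<in> permutations_of_set (N - {i})" "q' \<in> Q"
      and e: "ins q i ys = ins q' i ys'"
    have ly: "length ys = card N - 1" "length ys' = card N - 1"
      using a fin iN length_finite_permutations_of_set by fastforce+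
    have ni: "i \<notin> set ys" "i \<notin> set ys'" using a by (auto simp: permutations_of_set_def)
    have "q = q'" using pos_ins[OF ni(1), of q] pos_ins[OF ni(2), of q'] e a Q ly by force
    moreover have "ys = ys'" using remove1_ins[OF ni(1), of q] remove1_ins[OF ni(2), of q'] e by simp
    ultimately show "ys = ys' \<and> q = q'" by simp
  qed
  ultimately have "card {xs \<in> permutations_of_set N. pos xs i \<in> Q} = card (permutations_of_set (N - {i}) \<times> Q)"
    by (simp add: card_image)
  also have "\<dots> = card Q * fact (card N - 1)"
    using fin iN fQ by (simp add: card_cartesian_product)
  finally show ?thesis .
qed




definition Obj :: "nat \<Rightarrow> (nat \<times> nat list \<times> nat \<times> nat) set" where
  "Obj t = ({0} \<times> permutations_of_set {..<3*t} \<times> {..<t+1} \<times> {..<2*t+1})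
         \<union> ({1} \<times> permutations_of_set {..<3*t} \<times> {..<2*t} \<times> {..<2*t+1})
         \<union> ({2} \<times> permutations_of_set {..<3*t} \<times> {..<t} \<times> {..<2*t})"

fun cellset :: "nat \<Rightarrow> nat \<times> nat list \<times> nat \<times> nat \<Rightarrow> nat \<Rightarrow> nat set" where
  "cellset t (k, xs, a, b) r =
    (if k = 0 then {xs ! r}
     else if k = 1 then (if r < t - 1 then {xs ! (t + 1 + r)} else set (take (t + 1) xs))
     else (if r < t - 1 then {xs ! (2*t + 1 + r)} else set (take (2*t + 1) xs)))"

definition cv :: "nat \<Rightarrow> nat \<times> nat list \<times> nat \<times> nat \<Rightarrow> nat \<Rightarrow> nat \<Rightarrow> nat" where
  "cv t ob r l = of_bool (l \<in> cellset t ob r)"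

fun phi1 :: "nat \<Rightarrow> nat \<Rightarrow> nat \<times> nat list \<times> nat \<times> nat \<Rightarrow> nat \<times> nat list \<times> nat \<times> nat" where
  "phi1 t i (k, xs, a, b) = (1, ins a i (remove1 i xs), pos xs i - t, b)"

fun phi2 :: "nat \<Rightarrow> nat \<Rightarrow> nat \<times> nat list \<times> nat \<times> nat \<Rightarrow> nat \<times> nat list \<times> nat \<times> nat" where
  "phi2 t i (k, xs, a, b) = (1, ins (2*t + a) i (remove1 i xs), b, pos xs i)"

definition Main :: "nat \<Rightarrow> nat \<Rightarrow> (nat \<times> nat list \<times> nat \<times> nat) set" where
  "Main t i = {ob \<in> Obj t. fst ob \<noteq> 1 \<or> pos (fst (snd ob)) i \<in> {t+1..<2*t}}"

fun grp :: "nat \<Rightarrow> nat \<Rightarrow> nat \<times> nat list \<times> nat \<times> nat \<Rightarrow> (nat \<times> nat list \<times> nat \<times> nat) set" where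
  "grp t i (k, xs, a, b) =
    (if k = 0 then (if pos xs i < t then {(k, xs, a, b)} else {(k, xs, a, b), phi1 t i (k, xs, a, b)})
     else if k = 1 then {(k, xs, a, b)}
     else (if 2*t + 1 \<le> pos xs i then {(k, xs, a, b)} else {(k, xs, a, b), phi2 t i (k, xs, a, b)}))"

fun coef :: "nat \<Rightarrow> nat \<Rightarrow> nat \<times> nat list \<times> nat \<times> nat \<Rightarrow> nat \<times> nat list \<times> nat \<times> nat \<Rightarrow> nat \<Rightarrow> nat" where
  "coef t i (k, xs, a, b) o' r =
    (if k = 0 then (if pos xs i < t then of_bool (o' = (k, xs, a, b) \<and> r = pos xs i)
                    else (if o' = (k, xs, a, b) then 1 else of_bool (r = t - 1)))
     else if k = 1 then of_bool (o' = (k, xs, a, b) \<and> r = pos xs i - (t + 1))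
     else (if 2*t + 1 \<le> pos xs i then of_bool (o' = (k, xs, a, b) \<and> r = pos xs i - (2*t + 1))
           else (if o' = (k, xs, a, b) then of_bool (r = t - 1) else 1)))"

lemma sum_seg:
  assumes "distinct zs" "j + d \<le> length zs"
  shows "(\<Sum>r<d. of_bool (l = zs ! (j + r)) :: nat) + of_bool (l \<in> set (take j zs))
         = of_bool (l \<in> set (take (j + d) zs))"
  using assms(2)
proof (induction d)
  case 0
  then show ?case by simp
next
  case (Suc d)
  have jd: "j + d < length zs" using Suc by simp
  have tk: "take (j + Suc d) zs = take (j + d) zs @ [zs ! (j + d)]"
    using jd by (simp add: take_Suc_conv_app_nth)
  have nin: "zs ! (j + d) \<notin> set (take (j + d) zs)"
  proof
    assume "zs ! (j + d) \<in> set (take (j + d) zs)"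
    then obtain r where r: "r < length (take (j + d) zs)" "take (j + d) zs ! r = zs ! (j + d)"
      by (auto simp: in_set_conv_nth)
    then have "r < j + d" "zs ! r = zs ! (j + d)" by auto
    then show False using nth_eq_iff_index_eq[OF assms(1)] jd by fastforce
  qed
  show ?case using Suc jd nin tk by auto
qed

lemma cs0: "cellset t (0, xs, a, b) r = {xs ! r}" by simp
lemma cs1: "r < t - 1 \<Longrightarrow> cellset t (1, xs, a, b) r = {xs ! (t + 1 + r)}" by simp
lemma cs1': "\<not> r < t - 1 \<Longrightarrow> cellset t (1, xs, a, b) r = set (take (t + 1) xs)" by simp
lemma cs2: "r < t - 1 \<Longrightarrow> cellset t (2, xs, a, b) r = {xs ! (2*t + 1 + r)}" by simp
lemma cs2': "\<not> r < t - 1 \<Longrightarrow> cellset t (2, xs, a, b) r = set (take (2*t + 1) xs)" by simp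

lemma sum_seg0:
  assumes "distinct zs" "d \<le> length zs"
  shows "(\<Sum>r<d. of_bool (l = zs ! r) :: nat) = of_bool (l \<in> set (take d zs))"
  using sum_seg[of zs 0 d l] assms by (simp del: sum_of_bool_eq)

lemma par2: "i \<notin> Y \<Longrightarrow> (of_bool (l \<in> Y) + of_bool (l \<in> insert i Y)) mod 2 = (of_bool (l = i) :: nat)"
  by (cases "l \<in> Y"; cases "l = i") auto

lemma par2': "i \<notin> Y \<Longrightarrow> (of_bool (l \<in> insert i Y) + of_bool (l \<in> Y)) mod 2 = (of_bool (l = i) :: nat)"
  by (cases "l \<in> Y"; cases "l = i") auto

lemma sum_single: "p < (t::nat) \<Longrightarrow> (\<Sum>r<t. of_bool (r = p) * f r) = (f p :: nat)"
proof -
  assume "p < t"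
  have "(\<Sum>r<t. of_bool (r = p) * f r) = (\<Sum>r<t. if r = p then f r else 0)"
    by (rule sum.cong) auto
  also have "\<dots> = f p" using \<open>p < t\<close> by (subst sum.delta) auto
  finally show ?thesis .
qed

lemma sum_last: "1 \<le> (t::nat) \<Longrightarrow> (\<Sum>r<t. f r) = (\<Sum>r<t-1. f r) + (f (t - 1) :: nat)"
proof -
  assume "1 \<le> t"
  then obtain t' where "t = Suc t'" by (cases t) auto
  then show ?thesis by simp
qed

lemma obj_facts:
  assumes "(k, xs, a, b) \<in> Obj t" "i < 3*t"
  shows "set xs = {..<3*t}" "distinct xs" "length xs = 3*t" "pos xs i < 3*t" "xs ! pos xs i = i"
    "xs = ins (pos xs i) i (remove1 i xs)" "i \<notin> set (remove1 i xs)" "distinct (remove1 i xs)"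
    "length (remove1 i xs) = 3*t - 1"
    "k = 0 \<and> a < t+1 \<and> b < 2*t+1 \<or> k = 1 \<and> a < 2*t \<and> b < 2*t+1 \<or> k = 2 \<and> a < t \<and> b < 2*t"
proof -
  have xs: "xs \<in> permutations_of_set {..<3*t}" and kab: "k = 0 \<and> a < t+1 \<and> b < 2*t+1 \<or> k = 1 \<and> a < 2*t \<and> b < 2*t+1 \<or> k = 2 \<and> a < t \<and> b < 2*t"
    using assms(1) unfolding Obj_def by auto
  show s: "set xs = {..<3*t}" and d: "distinct xs" using xs by (auto simp: permutations_of_set_def)
  show "length xs = 3*t" using s d by (metis card_lessThan distinct_card)
  then show "pos xs i < 3*t" using pos_less[of i xs] s assms(2) by auto
  show "xs ! pos xs i = i" using nth_pos[of i xs] s assms(2) by auto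
  show "xs = ins (pos xs i) i (remove1 i xs)" using ins_remove1[of i xs] s d assms(2) by auto
  show "i \<notin> set (remove1 i xs)" using d by simp
  show "distinct (remove1 i xs)" using d by simp
  show "length (remove1 i xs) = 3*t - 1" using s d assms(2)
    by (metis \<open>length xs = 3*t\<close> length_remove1 lessThan_iff)
  show "k = 0 \<and> a < t+1 \<and> b < 2*t+1 \<or> k = 1 \<and> a < 2*t \<and> b < 2*t+1 \<or> k = 2 \<and> a < t \<and> b < 2*t" by (rule kab)
qed

lemma recover:
  assumes t: "1 \<le> t" and i: "i < 3*t" and ob: "ob \<in> Main t i"
  shows "(\<Sum>o'\<in>grp t i ob. \<Sum>r<t. coef t i ob o' r * cv t o' r l) mod 2 = of_bool (l = i)"
proof -
  obtain k xs a b where obd: "ob = (k, xs, a, b)" by (cases ob) auto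
  have inO: "(k, xs, a, b) \<in> Obj t" using ob obd unfolding Main_def by auto
  define p where "p = pos xs i"
  define ys where "ys = remove1 i xs"
  note F = obj_facts[OF inO i, folded p_def ys_def]
  have kM: "k = 1 \<Longrightarrow> p \<in> {t+1..<2*t}" using ob obd unfolding Main_def p_def by auto
  have ly: "length ys = 3*t - 1" using F by simp
  consider "k = 0" "p < t" | "k = 0" "t \<le> p" | "k = 1" | "k = 2" "2*t+1 \<le> p" | "k = 2" "p < 2*t+1"
    using F(10) by linarith
  then show ?thesis
  proof cases
    case 1
    have "grp t i ob = {ob}" using 1 obd p_def by simp
    then have "(\<Sum>o'\<in>grp t i ob. \<Sum>r<t. coef t i ob o' r * cv t o' r l) = (\<Sum>r<t. of_bool (r = p) * cv t ob r l)"
      using 1 obd p_def by simp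
    also have "\<dots> = cv t ob p l" by (rule sum_single[OF 1(2)])
    also have "\<dots> = of_bool (l = i)" using 1 obd F(5) by (simp add: cv_def)
    finally show ?thesis by simp
  next
    case 2
    define o' where "o' = phi1 t i ob"
    have o': "o' = (1, ins a i ys, p - t, b)" using obd o'_def p_def ys_def by simp
    have ne: "o' \<noteq> ob" using o' obd 2 by simp
    have "grp t i ob = {ob, o'}" using 2 obd p_def o'_def by simp
    then have e1: "(\<Sum>o'\<in>grp t i ob. \<Sum>r<t. coef t i ob o' r * cv t o' r l)
       = (\<Sum>r<t. cv t ob r l) + (\<Sum>r<t. of_bool (r = t - 1) * cv t o' r l)"
      using ne 2 obd p_def by (simp add: sum.insert)
    have e2: "(\<Sum>r<t. cv t ob r l) = (\<Sum>r<t. of_bool (l = xs ! r))"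
      using 2 obd by (simp add: cv_def del: sum_of_bool_eq)
    have e3: "(\<Sum>r<t. of_bool (l = xs ! r) :: nat) = of_bool (l \<in> set (take t xs))"
      using sum_seg0[OF F(2), of t l] F(3) by (simp del: sum_of_bool_eq)
    have e4: "(\<Sum>r<t. of_bool (r = t - 1) * cv t o' r l) = cv t o' (t - 1) l"
      using t by (intro sum_single) simp
    have e5: "cv t o' (t - 1) l = of_bool (l \<in> set (take (t + 1) (ins a i ys)))"
      using o' by (simp add: cv_def)
    have e6: "set (take (t + 1) (ins a i ys)) = insert i (set (take t ys))"
    proof -
      have "a < t + 1" using F(10) 2 by simp
      moreover have "a \<le> length ys" using F(10) 2 ly t by linarith
      ultimately show ?thesis using set_take_ins_gt[of a "t+1" ys i] by simp
    qed
    have e7: "take t xs = take t ys"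
    proof -
      have "p \<le> length ys" using F(4) ly by linarith
      then have "take t (ins p i ys) = take t ys" using 2 by (intro take_ins_le) auto
      then show ?thesis using F(6) by simp
    qed
    have ni: "i \<notin> set (take t ys)" using F(7) in_set_takeD by fastforce
    have "(\<Sum>o'\<in>grp t i ob. \<Sum>r<t. coef t i ob o' r * cv t o' r l)
        = of_bool (l \<in> set (take t ys)) + of_bool (l \<in> insert i (set (take t ys)))"
      unfolding e1 e2 e3 e4 e5 e6 e7 ..
    then show ?thesis using par2[OF ni] by simp
  next
    case 3
    have p: "t + 1 \<le> p" "p < 2*t" using kM 3 by auto
    have "grp t i ob = {ob}" using 3 obd by simp
    then have "(\<Sum>o'\<in>grp t i ob. \<Sum>r<t. coef t i ob o' r * cv t o' r l) = (\<Sum>r<t. of_bool (r = p - (t+1)) * cv t ob r l)"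
      using 3 obd p_def by simp
    also have "\<dots> = cv t ob (p - (t+1)) l" using p by (intro sum_single) simp
    also have "\<dots> = of_bool (l = i)"
    proof -
      have r: "p - (t+1) < t - 1" "t + 1 + (p - (t+1)) = p" using p by auto
      show ?thesis unfolding cv_def obd 3 cs1[OF r(1)] r(2) F(5) by simp
    qed
    finally show ?thesis by simp
  next
    case 4
    have p: "2*t + 1 \<le> p" "p < 3*t" using 4 F(4) by auto
    have "grp t i ob = {ob}" using 4 obd p_def by simp
    then have "(\<Sum>o'\<in>grp t i ob. \<Sum>r<t. coef t i ob o' r * cv t o' r l) = (\<Sum>r<t. of_bool (r = p - (2*t+1)) * cv t ob r l)"
      using 4 obd p_def by simp
    also have "\<dots> = cv t ob (p - (2*t+1)) l" using p by (intro sum_single) simp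
    also have "\<dots> = of_bool (l = i)"
    proof -
      have r: "p - (2*t+1) < t - 1" "2*t + 1 + (p - (2*t+1)) = p" using p by auto
      show ?thesis unfolding cv_def obd 4 cs2[OF r(1)] r(2) F(5) by simp
    qed
    finally show ?thesis by simp
  next
    case 5
    define o' where "o' = phi2 t i ob"
    define xs' where "xs' = ins (2*t + a) i ys"
    have o': "o' = (1, xs', b, p)" using obd o'_def p_def ys_def xs'_def by simp
    have ne: "o' \<noteq> ob" using o' obd 5 by simp
    have a: "a < t" using F(10) 5 by simp
    have lxs': "length xs' = 3*t" using length_ins[of "2*t+a" ys i] ly a t unfolding xs'_def by simp
    have dxs': "distinct xs'" unfolding xs'_def by (rule distinct_ins[OF F(7) F(8)])
    have "grp t i ob = {ob, o'}"
    proof -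
      have "\<not> 2*t + 1 \<le> pos xs i" using 5 unfolding p_def by simp
      then show ?thesis unfolding obd o'_def 5 grp.simps by simp
    qed
    then have e1: "(\<Sum>o'\<in>grp t i ob. \<Sum>r<t. coef t i ob o' r * cv t o' r l)
       = (\<Sum>r<t. of_bool (r = t - 1) * cv t ob r l) + (\<Sum>r<t. cv t o' r l)"
      using ne 5 obd p_def by (simp add: sum.insert)
    have e2: "(\<Sum>r<t. of_bool (r = t - 1) * cv t ob r l) = cv t ob (t - 1) l"
      using t by (intro sum_single) simp
    have e3: "cv t ob (t - 1) l = of_bool (l \<in> set (take (2*t + 1) xs))"
      unfolding cv_def obd 5 by (subst cs2') auto
    have e4: "set (take (2*t + 1) xs) = insert i (set (take (2*t) ys))"
    proof -
      have "p \<le> length ys" using F(4) ly by linarith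
      then have "set (take (2*t + 1) (ins p i ys)) = insert i (set (take (2*t + 1 - 1) ys))"
        using 5 by (intro set_take_ins_gt) auto
      then show ?thesis using F(6) by simp
    qed
    have e5: "(\<Sum>r<t. cv t o' r l) = (\<Sum>r<t-1. cv t o' r l) + cv t o' (t - 1) l"
      using t by (rule sum_last)
    have e6: "(\<Sum>r<t-1. cv t o' r l) = (\<Sum>r<t-1. of_bool (l = xs' ! (t + 1 + r)))"
      unfolding o' cv_def by (intro sum.cong refl) (subst cs1, auto)
    have e7: "cv t o' (t - 1) l = of_bool (l \<in> set (take (t + 1) xs'))"
      unfolding o' cv_def by (subst cs1') auto
    have e8: "(\<Sum>r<t-1. of_bool (l = xs' ! (t + 1 + r)) :: nat) + of_bool (l \<in> set (take (t + 1) xs'))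
        = of_bool (l \<in> set (take (t + 1 + (t - 1)) xs'))"
      using sum_seg[OF dxs', of "t+1" "t-1" l] lxs' t by (simp del: sum_of_bool_eq)
    have e9: "t + 1 + (t - 1) = 2*t" using t by simp
    have e10: "take (2*t) xs' = take (2*t) ys"
      unfolding xs'_def using a ly by (intro take_ins_le) auto
    have ni: "i \<notin> set (take (2*t) ys)" using F(7) in_set_takeD by fastforce
    have "(\<Sum>o'\<in>grp t i ob. \<Sum>r<t. coef t i ob o' r * cv t o' r l)
        = of_bool (l \<in> insert i (set (take (2*t) ys))) + of_bool (l \<in> set (take (2*t) ys))"
      unfolding e1 e2 e3 e4 e5 e6 e7 add.assoc[symmetric] e8 e9 e10 ..
    then show ?thesis using par2'[OF ni] by simp
  qed
qed





lemma main_obj: "ob \<in> Main t i \<Longrightarrow> ob \<in> Obj t"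
  unfolding Main_def by auto

lemma phi1_in:
  assumes "(0, xs, a, b) \<in> Obj t" "i < 3*t" "t \<le> pos xs i" "1 \<le> t"
  shows "phi1 t i (0, xs, a, b) \<in> Obj t" "fst (phi1 t i (0, xs, a, b)) = 1"
    "pos (fst (snd (phi1 t i (0, xs, a, b)))) i = a" "a \<le> t"
proof -
  note F = obj_facts[OF assms(1,2)]
  have xs: "xs \<in> permutations_of_set {..<3*t}" using F by (auto simp: permutations_of_set_def)
  have ys: "remove1 i xs \<in> permutations_of_set ({..<3*t} - {i})" using remove1_perm[OF xs] assms(2) by simp
  have "ins a i (remove1 i xs) \<in> permutations_of_set {..<3*t}" using ins_perm[OF ys] assms(2) by simp
  moreover have "pos xs i - t < 2*t" using F(4) by linarith
  moreover have "b < 2*t+1" using F(10) by auto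
  ultimately show "phi1 t i (0, xs, a, b) \<in> Obj t" unfolding Obj_def by auto
  show "fst (phi1 t i (0, xs, a, b)) = 1" by simp
  show "a \<le> t" using F(10) by auto
  then show "pos (fst (snd (phi1 t i (0, xs, a, b)))) i = a"
    using pos_ins[OF F(7), of a] F(9) assms(4) by simp
qed

lemma phi2_in:
  assumes "(2, xs, a, b) \<in> Obj t" "i < 3*t" "pos xs i < 2*t + 1" "1 \<le> t"
  shows "phi2 t i (2, xs, a, b) \<in> Obj t" "fst (phi2 t i (2, xs, a, b)) = 1"
    "pos (fst (snd (phi2 t i (2, xs, a, b)))) i = 2*t + a"
proof -
  note F = obj_facts[OF assms(1,2)]
  have xs: "xs \<in> permutations_of_set {..<3*t}" using F by (auto simp: permutations_of_set_def)
  have ys: "remove1 i xs \<in> permutations_of_set ({..<3*t} - {i})" using remove1_perm[OF xs] assms(2) by simp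
  have "ins (2*t + a) i (remove1 i xs) \<in> permutations_of_set {..<3*t}" using ins_perm[OF ys] assms(2) by simp
  moreover have "b < 2*t" using F(10) by auto
  ultimately show "phi2 t i (2, xs, a, b) \<in> Obj t" unfolding Obj_def using assms(3) by auto
  show "fst (phi2 t i (2, xs, a, b)) = 1" by simp
  have "a < t" using F(10) by auto
  then show "pos (fst (snd (phi2 t i (2, xs, a, b)))) i = 2*t + a"
    using pos_ins[OF F(7), of "2*t+a"] F(9) assms(4) by simp
qed

lemma phi1_inj:
  assumes "(0, xs, a, b) \<in> Obj t" "(0, xs', a', b') \<in> Obj t" "i < 3*t" "t \<le> pos xs i" "t \<le> pos xs' i" "1 \<le> t"
    "phi1 t i (0, xs, a, b) = phi1 t i (0, xs', a', b')"
  shows "(0::nat, xs, a, b) = (0, xs', a', b')"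
proof -
  note F = obj_facts[OF assms(1,3)] and F' = obj_facts[OF assms(2,3)]
  have e: "ins a i (remove1 i xs) = ins a' i (remove1 i xs')" "pos xs i - t = pos xs' i - t" "b = b'"
    using assms(7) by auto
  have r: "remove1 i xs = remove1 i xs'" using e(1) remove1_ins[OF F(7), of a] remove1_ins[OF F'(7), of a'] by simp
  have "a \<le> length (remove1 i xs)" "a' \<le> length (remove1 i xs')" using F(9,10) F'(9,10) assms(6) by auto
  then have "a = a'" using e(1) pos_ins[OF F(7), of a] pos_ins[OF F'(7), of a'] by simp
  moreover have "pos xs i = pos xs' i" using e(2) assms(4,5) by linarith
  then have "xs = xs'" using F(6) F'(6) r by metis
  ultimately show ?thesis using e(3) by simp
qed

lemma phi2_inj:
  assumes "(2, xs, a, b) \<in> Obj t" "(2, xs', a', b') \<in> Obj t" "i < 3*t" "1 \<le> t"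
    "phi2 t i (2, xs, a, b) = phi2 t i (2, xs', a', b')"
  shows "(2::nat, xs, a, b) = (2, xs', a', b')"
proof -
  note F = obj_facts[OF assms(1,3)] and F' = obj_facts[OF assms(2,3)]
  have e: "ins (2*t+a) i (remove1 i xs) = ins (2*t+a') i (remove1 i xs')" "pos xs i = pos xs' i" "b = b'"
    using assms(5) by auto
  have r: "remove1 i xs = remove1 i xs'" using e(1) remove1_ins[OF F(7), of "2*t+a"] remove1_ins[OF F'(7), of "2*t+a'"] by simp
  have "2*t+a \<le> length (remove1 i xs)" "2*t+a' \<le> length (remove1 i xs')" using F(9,10) F'(9,10) assms(4) by auto
  then have "a = a'" using e(1) pos_ins[OF F(7), of "2*t+a"] pos_ins[OF F'(7), of "2*t+a'"] by simp
  moreover have "xs = xs'" using F(6) F'(6) r e(2) by metis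
  ultimately show ?thesis using e(3) by simp
qed

lemma grp_cases:
  assumes "ob \<in> Main t i"
  obtains "grp t i ob = {ob}"
   | xs a b where "ob = (0, xs, a, b)" "t \<le> pos xs i" "grp t i ob = {ob, phi1 t i ob}"
   | xs a b where "ob = (2, xs, a, b)" "pos xs i < 2*t+1" "grp t i ob = {ob, phi2 t i ob}"
proof -
  obtain k xs a b where obd: "ob = (k, xs, a, b)" by (cases ob) auto
  have "k = 0 \<or> k = 1 \<or> k = 2" using main_obj[OF assms] obd unfolding Obj_def by auto
  then show ?thesis using that obd by (cases "pos xs i < t"; cases "2*t+1 \<le> pos xs i") auto
qed

lemma grp_sub:
  assumes "ob \<in> Main t i" "i < 3*t" "1 \<le> t"
  shows "grp t i ob \<subseteq> Obj t" "ob \<in> grp t i ob" "\<And>x. x \<in> grp t i ob \<Longrightarrow> x \<noteq> ob \<Longrightarrow> x \<notin> Main t i"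
proof -
  have O: "ob \<in> Obj t" by (rule main_obj[OF assms(1)])
  have "grp t i ob \<subseteq> Obj t \<and> ob \<in> grp t i ob \<and> (\<forall>x. x \<in> grp t i ob \<longrightarrow> x \<noteq> ob \<longrightarrow> x \<notin> Main t i)"
  proof (cases rule: grp_cases[OF assms(1)])
    case 1 then show ?thesis using O by auto
  next
    case (2 xs a b)
    note P = phi1_in[of xs a b t i, folded 2(1)]
    have "pos (fst (snd (phi1 t i ob))) i \<notin> {t+1..<2*t}" using P(3) P(4) O 2 assms by auto
    then have "phi1 t i ob \<notin> Main t i" unfolding Main_def using P(2) O 2 assms by auto
    then show ?thesis using P(1) O 2 assms by auto
  next
    case (3 xs a b)
    note P = phi2_in[of xs a b t i, folded 3(1)]
    have "pos (fst (snd (phi2 t i ob))) i \<notin> {t+1..<2*t}" using P(3) O 3 assms by auto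
    then have "phi2 t i ob \<notin> Main t i" unfolding Main_def using P(2) O 3 assms by auto
    then show ?thesis using P(1) O 3 assms by auto
  qed
  then show "grp t i ob \<subseteq> Obj t" "ob \<in> grp t i ob" "\<And>x. x \<in> grp t i ob \<Longrightarrow> x \<noteq> ob \<Longrightarrow> x \<notin> Main t i"
    by auto
qed

lemma grp_disj:
  assumes "ob \<in> Main t i" "ob' \<in> Main t i" "ob \<noteq> ob'" "i < 3*t" "1 \<le> t"
  shows "grp t i ob \<inter> grp t i ob' = {}"
proof (rule ccontr)
  assume "grp t i ob \<inter> grp t i ob' \<noteq> {}"
  then obtain x where x: "x \<in> grp t i ob" "x \<in> grp t i ob'" by auto
  have xn: "x \<notin> Main t i"
    using grp_sub(3)[OF assms(1,4,5) x(1)] grp_sub(3)[OF assms(2,4,5) x(2)] assms(3) by auto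
  have O: "ob \<in> Obj t" "ob' \<in> Obj t" using main_obj assms by auto
  show False
  proof (cases rule: grp_cases[OF assms(1)])
    case 1 then show ?thesis using x xn assms by auto
  next
    case (2 xs a b)
    then have x1: "x = phi1 t i ob" using x xn assms by auto
    show ?thesis
    proof (cases rule: grp_cases[OF assms(2)])
      case 1 then show ?thesis using x xn assms by auto
    next
      case (2 xs' a' b')
      then have "x = phi1 t i ob'" using x xn assms by auto
      then show ?thesis using phi1_inj[of xs a b t xs' a' b' i] O x1 2 \<open>ob = (0, xs, a, b)\<close> \<open>t \<le> pos xs i\<close> assms by auto
    next
      case (3 xs' a' b')
      then have "x = phi2 t i ob'" using x xn assms by auto
      then have "pos (fst (snd x)) i = 2*t + a'" using phi2_in(3)[of xs' a' b' t i] O 3 assms by auto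
      moreover have "pos (fst (snd x)) i = a" "a \<le> t" using phi1_in(3,4)[of xs a b t i] O x1 \<open>ob = (0, xs, a, b)\<close> \<open>t \<le> pos xs i\<close> assms by auto
      ultimately show ?thesis using assms by auto
    qed
  next
    case (3 xs a b)
    then have x1: "x = phi2 t i ob" using x xn assms by auto
    show ?thesis
    proof (cases rule: grp_cases[OF assms(2)])
      case 1 then show ?thesis using x xn assms by auto
    next
      case (2 xs' a' b')
      then have "x = phi1 t i ob'" using x xn assms by auto
      then have "pos (fst (snd x)) i = a'" "a' \<le> t" using phi1_in(3,4)[of xs' a' b' t i] O 2 assms by auto
      moreover have "pos (fst (snd x)) i = 2*t + a" using phi2_in(3)[of xs a b t i] O x1 \<open>ob = (2, xs, a, b)\<close> \<open>pos xs i < 2*t+1\<close> assms by auto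
      ultimately show ?thesis using assms by auto
    next
      case (3 xs' a' b')
      then have "x = phi2 t i ob'" using x xn assms by auto
      then show ?thesis using phi2_inj[of xs a b t xs' a' b' i] O x1 3 \<open>ob = (2, xs, a, b)\<close> assms by auto
    qed
  qed
qed




lemma Obj_split: "Obj t = ({0} \<times> permutations_of_set {..<3*t} \<times> {..<t+1} \<times> {..<2*t+1})
         \<union> (({1} \<times> permutations_of_set {..<3*t} \<times> {..<2*t} \<times> {..<2*t+1})
         \<union> ({2} \<times> permutations_of_set {..<3*t} \<times> {..<t} \<times> {..<2*t}))"
  unfolding Obj_def by auto

lemma card_Obj: "card (Obj t) = fact (3*t) * ((t+1)*(2*t+1)) + (fact (3*t) * (2*t*(2*t+1)) + fact (3*t) * (t*(2*t)))"
  unfolding Obj_split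
  by (subst card_Un_disjoint, force, force, force)+ (simp add: card_cartesian_product)

lemma Main_split: "Main t i = ({0} \<times> permutations_of_set {..<3*t} \<times> {..<t+1} \<times> {..<2*t+1})
         \<union> (({1} \<times> {xs \<in> permutations_of_set {..<3*t}. pos xs i \<in> {t+1..<2*t}} \<times> {..<2*t} \<times> {..<2*t+1})
         \<union> ({2} \<times> permutations_of_set {..<3*t} \<times> {..<t} \<times> {..<2*t}))"
  unfolding Main_def Obj_def by auto

lemma card_Main:
  assumes "i < 3*t"
  shows "card (Main t i) = fact (3*t) * ((t+1)*(2*t+1)) + ((t - 1) * fact (3*t - 1) * (2*t*(2*t+1)) + fact (3*t) * (t*(2*t)))"
proof -
  define A where "A = {xs \<in> permutations_of_set {..<3*t}. pos xs i \<in> {t+1..<2*t}}"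
  have c: "card A = (t - 1) * fact (3*t - 1)"
  proof -
    have "{t+1..<2*t} \<subseteq> {..<3*t}" by auto
    then show ?thesis unfolding A_def using card_pos_in[of "{..<3*t}" i "{t+1..<2*t}"] assms by simp
  qed
  have fA: "finite A" unfolding A_def by simp
  have M: "Main t i = ({0} \<times> permutations_of_set {..<3*t} \<times> {..<t+1} \<times> {..<2*t+1})
         \<union> (({1} \<times> A \<times> {..<2*t} \<times> {..<2*t+1})
         \<union> ({2} \<times> permutations_of_set {..<3*t} \<times> {..<t} \<times> {..<2*t}))"
    unfolding Main_split A_def ..
  show ?thesis
    unfolding M
    by (subst card_Un_disjoint, use fA in force, use fA in force, force)+ (simp add: card_cartesian_product c fA)
qed

lemma rate_eq:
  assumes "1 \<le> t" and that: "i < 3*t"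
  shows "real (card (Main t i)) / real (card (Obj t)) = (16 * real t ^ 2 + 7 * real t + 1) / (24 * real t ^ 2 + 15 * real t + 3)"
proof -
  define F :: nat where "F = fact (3*t - 1)"
  have f: "fact (3*t) = 3*t*F"
  proof -
    have "3*t = Suc (3*t - 1)" using assms by simp
    then have "fact (3*t) = (fact (Suc (3*t - 1)) :: nat)" by simp
    also have "\<dots> = Suc (3*t - 1) * fact (3*t - 1)" by simp
    finally show ?thesis unfolding F_def using assms by simp
  qed
  have Fp: "real F > 0" unfolding F_def by simp
  have cm: "real (card (Main t i)) = real F * real t * (16 * real t ^ 2 + 7 * real t + 1)"
  proof -
    have "real (card (Main t i)) = real (3*t*F * ((t+1)*(2*t+1)) + ((t - 1) * F * (2*t*(2*t+1)) + 3*t*F * (t*(2*t))))"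
      using card_Main[OF that] f unfolding F_def by simp
    also have "\<dots> = 3*real t*real F * ((real t+1)*(2*real t+1)) + ((real t - 1) * real F * (2*real t*(2*real t+1)) + 3*real t*real F * (real t*(2*real t)))"
    proof -
      have r1: "real (t - 1) = real t - 1" using assms by (simp add: of_nat_diff)
      show ?thesis by (simp only: of_nat_add of_nat_mult of_nat_numeral of_nat_1 r1)
    qed
    also have "\<dots> = real F * real t * (16 * real t ^ 2 + 7 * real t + 1)"
      by (simp add: algebra_simps power2_eq_square)
    finally show ?thesis .
  qed
  have co: "real (card (Obj t)) = real F * real t * (24 * real t ^ 2 + 15 * real t + 3)"
  proof -
    have "real (card (Obj t)) = real (3*t*F * ((t+1)*(2*t+1)) + (3*t*F * (2*t*(2*t+1)) + 3*t*F * (t*(2*t))))"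
      using card_Obj f by simp
    also have "\<dots> = real F * real t * (24 * real t ^ 2 + 15 * real t + 3)"
      by (simp add: algebra_simps power2_eq_square)
    finally show ?thesis .
  qed
  have tp: "real t > 0" using assms by simp
  have nz: "real F * real t \<noteq> 0" using Fp tp by simp
  show ?thesis unfolding cm co by (rule mult_divide_mult_cancel_left[OF nz])
qed




lemma coef01: "coef t i ob o' r \<in> {0, 1}"
  by (cases ob) auto

lemma cv01: "cv t ob r l \<in> {0, 1}"
  by (simp add: cv_def)

lemma upper:
  assumes fR: "field R" and code: "is_PIR_code R t m p k C" and p: "0 < p"
  shows "k \<le> m"
proof -
  interpret field R by (rule fR)
  have "\<exists>S :: nat \<Rightarrow> nat set. (\<forall>a<k. S a \<subseteq> {..<m}) \<and> (\<forall>a<k. \<forall>b<k. a \<noteq> b \<longrightarrow> S a \<inter> S b = {}) \<and>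
    (\<forall>a<k. in_span_of_columns R t p C 0 (S a))"
    using code p unfolding is_PIR_code_def by simp
  then obtain S :: "nat \<Rightarrow> nat set" where S: "\<forall>a<k. S a \<subseteq> {..<m}" "\<forall>a<k. \<forall>b<k. a \<noteq> b \<longrightarrow> S a \<inter> S b = {}"
    "\<forall>a<k. in_span_of_columns R t p C 0 (S a)"
    by blast
  have ne: "S a \<noteq> {}" if a: "a < k" for a
  proof
    assume e: "S a = {}"
    have "in_span_of_columns R t p C 0 (S a)" using S(3) a by simp
    then obtain c where c: "\<forall>l<p. finsum R (\<lambda>(r, j). c r j \<otimes>\<^bsub>R\<^esub> C r j l) ({..<t} \<times> S a) = (if l = 0 then \<one>\<^bsub>R\<^esub> else \<zero>\<^bsub>R\<^esub>)"
      unfolding in_span_of_columns_def by blast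
    have "finsum R (\<lambda>(r, j). c r j \<otimes>\<^bsub>R\<^esub> C r j 0) ({..<t} \<times> S a) = \<one>\<^bsub>R\<^esub>" using c p by auto
    moreover have "finsum R (\<lambda>(r, j). c r j \<otimes>\<^bsub>R\<^esub> C r j 0) ({..<t} \<times> S a) = \<zero>\<^bsub>R\<^esub>" using e by simp
    ultimately show False using one_not_zero by simp
  qed
  define f where "f a = (SOME j. j \<in> S a)" for a
  have fS: "f a \<in> S a" if "a < k" for a using ne[OF that] unfolding f_def by (simp add: some_in_eq)
  have "inj_on f {..<k}"
  proof (rule inj_onI)
    fix a b assume ab: "a \<in> {..<k}" "b \<in> {..<k}" "f a = f b"
    show "a = b"
    proof (rule ccontr)
      assume "a \<noteq> b"
      then have "S a \<inter> S b = {}" using S(2) ab by auto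
      moreover have "f a \<in> S a" using fS[of a] ab(1) by simp
      moreover have "f a \<in> S b" using fS[of b] ab(2,3) by simp
      ultimately show False by auto
    qed
  qed
  moreover have "f ` {..<k} \<subseteq> {..<m}"
  proof
    fix x assume "x \<in> f ` {..<k}"
    then obtain a where "a < k" "x = f a" by auto
    then show "x \<in> {..<m}" using fS S(1) by auto
  qed
  ultimately have "card {..<k} \<le> card {..<m}" by (intro card_inj_on_le) auto
  then show ?thesis by simp
qed

lemma finite_Obj: "finite (Obj t)"
  unfolding Obj_def by simp

theorem theorem9:
  fixes t :: nat
  assumes "0 < t"
  shows "g 3 t \<ge> (16 * real t ^ 2 + 7 * real t + 1) / (24 * real t ^ 2 + 15 * real t + 3)"
proof -
  have t1: "1 \<le> t" using assms by simp
  define m where "m = card (Obj t)"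
  define K where "K = card (Main t 0)"
  have Kc: "card (Main t i) = K" if "i < 3*t" for i
    unfolding K_def using card_Main[OF that] card_Main[of 0 t] assms by simp
  obtain h where h: "bij_betw h {0..<m} (Obj t)"
    using ex_bij_betw_nat_finite[OF finite_Obj] unfolding m_def by blast
  define C where "C = (\<lambda>r j l. cv t (h j) r l)"
  have code: "is_PIR_code GF2 t m (3*t) K C"
    unfolding is_PIR_code_def array_code_def
  proof (intro conjI allI impI)
    show "C r j l \<in> carrier GF2" for r j l unfolding C_def using cv01 by simp
  next
    fix i assume i: "i < 3*t"
    obtain e where e: "bij_betw e {0..<K} (Main t i)"
      using ex_bij_betw_nat_finite[of "Main t i"] finite_subset[OF _ finite_Obj] main_obj Kc[OF i] by blast
    define S where "S a = {j \<in> {..<m}. h j \<in> grp t i (e a)}" for a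
    have eM: "e a \<in> Main t i" if "a < K" for a using e that by (auto simp: bij_betw_def)
    show "\<exists>S. (\<forall>a<K. S a \<subseteq> {..<m}) \<and> (\<forall>a<K. \<forall>b<K. a \<noteq> b \<longrightarrow> S a \<inter> S b = {}) \<and>
          (\<forall>a<K. in_span_of_columns GF2 t (3*t) C i (S a))"
    proof (intro exI[of _ S] conjI allI impI)
      show "S a \<subseteq> {..<m}" for a unfolding S_def by auto
    next
      fix a b assume ab: "a < K" "b < K" "a \<noteq> b"
      have "e a \<noteq> e b" using e ab by (auto simp: bij_betw_def inj_on_def)
      then have "grp t i (e a) \<inter> grp t i (e b) = {}" using grp_disj eM ab i t1 by blast
      then show "S a \<inter> S b = {}" unfolding S_def by auto
    next
      fix a assume a: "a < K"
      define ob where "ob = e a"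
      have ob: "ob \<in> Main t i" using eM a unfolding ob_def by simp
      have hS: "h ` S a = grp t i ob"
      proof -
        have "grp t i ob \<subseteq> h ` {0..<m}" using grp_sub(1)[OF ob i t1] h by (simp add: bij_betw_def)
        then show ?thesis unfolding S_def ob_def by auto
      qed
      have injS: "inj_on h (S a)" using h unfolding S_def bij_betw_def by (auto intro: inj_on_subset)
      have fS: "finite (S a)" unfolding S_def by simp
      show "in_span_of_columns GF2 t (3*t) C i (S a)"
        unfolding in_span_of_columns_def
      proof (intro exI[of _ "\<lambda>r j. coef t i ob (h j) r"] conjI allI impI)
        show "coef t i ob (h j) r \<in> carrier GF2" for r j using coef01 by simp
      next
        fix l assume l: "l < 3*t"
        have v01: "(\<lambda>(r, j). coef t i ob (h j) r * C r j l) x \<in> {0,1}" for x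
        proof (cases x)
          case (Pair r j)
          have "coef t i ob (h j) r \<in> {0,1}" "cv t (h j) r l \<in> {0,1}" by (rule coef01, rule cv01)
          then show ?thesis unfolding Pair C_def by auto
        qed
        have "finsum GF2 (\<lambda>(r, j). coef t i ob (h j) r \<otimes>\<^bsub>GF2\<^esub> C r j l) ({..<t} \<times> S a)
            = finsum GF2 (\<lambda>(r, j). coef t i ob (h j) r * C r j l) ({..<t} \<times> S a)"
        proof -
          have "(\<lambda>(r, j). coef t i ob (h j) r \<otimes>\<^bsub>GF2\<^esub> C r j l) = (\<lambda>(r, j). coef t i ob (h j) r * C r j l)"
          proof
            fix x show "(\<lambda>(r, j). coef t i ob (h j) r \<otimes>\<^bsub>GF2\<^esub> C r j l) x = (\<lambda>(r, j). coef t i ob (h j) r * C r j l) x"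
              using v01[of x] by (cases x) auto
          qed
          then show ?thesis by simp
        qed
        also have "\<dots> = (\<Sum>x\<in>{..<t} \<times> S a. (\<lambda>(r, j). coef t i ob (h j) r * C r j l) x) mod 2"
          using fS v01 by (intro GF2_finsum) auto
        also have "(\<Sum>x\<in>{..<t} \<times> S a. (\<lambda>(r, j). coef t i ob (h j) r * C r j l) x)
            = (\<Sum>r<t. \<Sum>j\<in>S a. coef t i ob (h j) r * cv t (h j) r l)"
          unfolding C_def by (simp add: sum.cartesian_product)
        also have "\<dots> = (\<Sum>j\<in>S a. \<Sum>r<t. coef t i ob (h j) r * cv t (h j) r l)"
          by (rule sum.swap)
        also have "\<dots> = (\<Sum>o'\<in>h ` S a. \<Sum>r<t. coef t i ob o' r * cv t o' r l)"
          by (rule sum.reindex[OF injS, symmetric, unfolded comp_def])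
        also have "\<dots> = (\<Sum>o'\<in>grp t i ob. \<Sum>r<t. coef t i ob o' r * cv t o' r l)"
          unfolding hS ..
        finally show "finsum GF2 (\<lambda>(r, j). coef t i ob (h j) r \<otimes>\<^bsub>GF2\<^esub> C r j l) ({..<t} \<times> S a)
            = (if l = i then \<one>\<^bsub>GF2\<^esub> else \<zero>\<^bsub>GF2\<^esub>)"
          using recover[OF t1 i ob, of l] by simp
      qed
    qed
  qed
  have mpos: "0 < m"
    unfolding m_def using card_Obj[of t] assms by simp
  have Kpos: "0 < K"
    unfolding K_def using card_Main[of 0 t] assms by simp
  have mem: "real K / real m \<in> PIR_rates 3 t"
  proof -
    have "\<exists>R p C'. field R \<and> finite (carrier R) \<and> 0 < m \<and> 0 < K \<and> real p = 3 * real t \<and> is_PIR_code R t m p K C'"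
      using GF2_field code mpos Kpos by (intro exI[of _ GF2] exI[of _ "3*t"] exI[of _ C]) simp
    then show ?thesis unfolding PIR_rates_def by blast
  qed
  have bdd: "bdd_above (PIR_rates 3 t)"
  proof (rule bdd_aboveI[of _ 1])
    fix x assume "x \<in> PIR_rates 3 t"
    then obtain k m' R p C' where x: "x = real k / real m'" "field R" "0 < m'" "real p = 3 * real t"
      "is_PIR_code R t m' p k C'"
      unfolding PIR_rates_def by blast
    have "real p > 0" using x(4) assms by simp
    then have "0 < p" by simp
    then have "k \<le> m'" using upper x by blast
    then show "x \<le> 1" using x(1,3) by simp
  qed
  have "real K / real m \<le> g 3 t" unfolding g_def using cSup_upper[OF mem bdd] .
  moreover have "real K / real m = (16 * real t ^ 2 + 7 * real t + 1) / (24 * real t ^ 2 + 15 * real t + 3)"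
    unfolding K_def m_def using rate_eq[OF t1, of 0] assms by simp
  ultimately show ?thesis by simp
qed


end
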